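(* Let $\alpha\in(0,1)$, $p\in(0,1)$, $\bar p=1-p$, and let $b_p$ denote the Bernoulli distribution $p\delta_1+\bar p\delta_0$. Let $B_{1,1-\alpha}\sim\mathrm{Beta}(1,1-\alpha)$, and let $W$ be a Bernoulli$(p)$ random variable independent of $B_{1,1-\alpha}$ and of $M_{\alpha,1}(b_p)$, with $M_{\alpha,1-\alpha}(b_p)\stackrel{d}{=}B_{1,1-\alpha}M_{\alpha,1}(b_p)+(1-B_{1,1-\alpha})W$. Then conditionally on $W=1$, $M_{\alpha,1-\alpha}(b_p)\stackrel{d}{=}1-B_{1,1-\alpha}M_{\alpha,1}(b_{\bar p})$ (with $B_{1,1-\alpha}$ and $M_{\alpha,1}(b_{\bar p})$ independent), and conditionally on $W=0$, $M_{\alpha,1-\alpha}(b_p)\stackrel{d}{=}B_{1,1-\alpha}M_{\alpha,1}(b_p)$. Equivalently, a density function of $M_{\alpha,1-\alpha}(b_p)$ is $$f_{\alpha,1-\alpha,p}(t)=(1-\alpha)\int_0^1\Big[\bar p\,f_{\alpha,1,p}\Big(\frac tu\Big)+p\,f_{\alpha,1,\bar p}\Big(\frac{1-t}{u}\Big)\Big]u^{-1}(1-u)^{-\alpha}\,du.$$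
   Context: $\tilde P_{\alpha,\theta}=\sum_kW_k\delta_{Z_k}$ with $V_k$ independent $\mathrm{Beta}(1-\alpha,\theta+k\alpha)$, $W_1=V_1$, $W_k=V_k\prod_{j<k}(1-V_j)$, $Z_k$ i.i.d. $\eta$ independent of $(V_k)$; $M_{\alpha,\theta}(\eta)=\int x\,\tilde P_{\alpha,\theta}(dx)$. For $q\in(0,1)$, $f_{\alpha,1,q}$ denotes a density of $M_{\alpha,1}(b_q)$ on $(0,1)$, extended by $0$ outside $(0,1)$. *)

theory Defs
  imports "HOL-Probability.Probability"
begin

definition beta_density :: "real \<Rightarrow> real \<Rightarrow> real \<Rightarrow> ennreal" where
  "beta_density a b x =
     (if 0 < x \<and> x < 1 then ennreal (x powr (a - 1) * (1 - x) powr (b - 1) / Beta a b) else 0)"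

definition beta_measure :: "real \<Rightarrow> real \<Rightarrow> real measure" where
  "beta_measure a b = density lborel (beta_density a b)"

definition bern :: "real \<Rightarrow> real measure" where
  "bern p = measure_pmf (map_pmf (\<lambda>b. if b then 1 else 0) (bernoulli_pmf p))"

text \<open>Stick-breaking weights: index k :: nat corresponds to the paper's k+1.
  W_k = V_k * prod_{j<k} (1 - V_j).\<close>
definition stick_weight :: "(nat \<Rightarrow> real) \<Rightarrow> nat \<Rightarrow> real" where
  "stick_weight V k = V k * (\<Prod>j<k. 1 - V j)"

text \<open>Law of M_{alpha,theta}(eta) = sum_k W_k Z_k, with (V_k) independent,
  V_k ~ Beta(1-alpha, theta + k alpha) (paper's indexing k >= 1), Z_k iid eta,
  independent of (V_k).\<close>
definition PY_mean_law :: "real \<Rightarrow> real \<Rightarrow> real measure \<Rightarrow> real measure" where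
  "PY_mean_law \<alpha> \<theta> \<eta> =
     distr (\<Pi>\<^sub>M k\<in>(UNIV::nat set). beta_measure (1 - \<alpha>) (\<theta> + real (Suc k) * \<alpha>) \<Otimes>\<^sub>M \<eta>)
           borel
           (\<lambda>\<omega>. \<Sum>k. stick_weight (\<lambda>j. fst (\<omega> j)) k * snd (\<omega> k))"

end

theory Submission
  imports Defs
begin

lemma Beta_pos: "0 < (a::real) \<Longrightarrow> 0 < b \<Longrightarrow> 0 < Beta a b"
  unfolding Beta_def by (simp add: Gamma_real_pos)

lemma beta_nn:
  assumes "0 < a" "0 < b"
  shows "(\<integral>\<^sup>+x. indicator {0<..<1} x * ennreal (x powr (a-1) * (1-x) powr (b-1)) \<partial>lborel)
         = ennreal (Beta a b)"
proof -
  have "(\<integral>\<^sup>+x. indicator {0<..<1} x * ennreal (x powr (a-1) * (1-x) powr (b-1)) \<partial>lborel)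
     = (\<integral>\<^sup>+x. ennreal (x powr (a-1) * (1-x) powr (b-1)) * indicator {0..1} x \<partial>lborel)"
  proof (rule nn_integral_cong_AE)
    have "AE x in lborel. x \<noteq> 0" "AE x in lborel. x \<noteq> 1" by (rule AE_lborel_singleton)+
    then show "AE x in lborel. indicator {0<..<1} x * ennreal (x powr (a-1) * (1-x) powr (b-1))
       = ennreal (x powr (a-1) * (1-x) powr (b-1)) * indicator {0..1} x"
      by eventually_elim (auto simp: indicator_def)
  qed
  also have "\<dots> = ennreal (Beta a b)"
    by (rule nn_integral_has_integral_lebesgue'[OF _ has_integral_Beta_real[OF assms]]) auto
  finally show ?thesis .
qed

lemma beta_density_meas[measurable]: "beta_density a b \<in> borel_measurable borel"
  unfolding beta_density_def by measurable

lemma sets_beta[simp, measurable_cong]: "sets (beta_measure a b) = sets borel"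
  by (simp add: beta_measure_def)

lemma space_beta[simp]: "space (beta_measure a b) = UNIV"
  by (simp add: beta_measure_def)

lemma beta_density_alt: "0 < a \<Longrightarrow> 0 < b \<Longrightarrow> beta_density a b x =
   indicator {0<..<1} x * ennreal (x powr (a-1) * (1-x) powr (b-1)) / ennreal (Beta a b)"
  unfolding beta_density_def using Beta_pos[of a b]
  by (auto simp: indicator_def divide_ennreal)

lemma nn_integral_beta:
  assumes "0 < a" "0 < b" "f \<in> borel_measurable borel"
  shows "(\<integral>\<^sup>+x. f x \<partial>beta_measure a b) =
    (\<integral>\<^sup>+x. indicator {0<..<1} x * ennreal (x powr (a-1) * (1-x) powr (b-1)) * f x \<partial>lborel) / ennreal (Beta a b)"
proof -
  have "(\<integral>\<^sup>+x. f x \<partial>beta_measure a b) = (\<integral>\<^sup>+x. beta_density a b x * f x \<partial>lborel)"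
    unfolding beta_measure_def using assms by (subst nn_integral_density) auto
  also have "\<dots> = (\<integral>\<^sup>+x. (indicator {0<..<1} x * ennreal (x powr (a-1) * (1-x) powr (b-1)) * f x) / ennreal (Beta a b) \<partial>lborel)"
    using assms by (intro nn_integral_cong) (simp add: beta_density_alt ennreal_times_divide mult_ac)
  also have "\<dots> = (\<integral>\<^sup>+x. indicator {0<..<1} x * ennreal (x powr (a-1) * (1-x) powr (b-1)) * f x \<partial>lborel) / ennreal (Beta a b)"
    using assms by (subst nn_integral_divide) auto
  finally show ?thesis .
qed

lemma prob_beta: assumes "0 < a" "0 < b" shows "prob_space (beta_measure a b)"
proof
  have "emeasure (beta_measure a b) (space (beta_measure a b)) = (\<integral>\<^sup>+x. 1 \<partial>beta_measure a b)"
    by simp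
  also have "\<dots> = ennreal (Beta a b) / ennreal (Beta a b)"
    using assms by (subst nn_integral_beta) (auto simp: beta_nn)
  also have "\<dots> = 1" using Beta_pos[OF assms] by (simp add: divide_ennreal)
  finally show "emeasure (beta_measure a b) (space (beta_measure a b)) = 1" .
qed

lemma beta_mean_compl:
  assumes "0 < a" "0 < b"
  shows "(\<integral>\<^sup>+x. ennreal (1 - x) \<partial>beta_measure a b) = ennreal (b / (a + b))"
proof -
  have "(\<integral>\<^sup>+x. ennreal (1 - x) \<partial>beta_measure a b) =
     (\<integral>\<^sup>+x. indicator {0<..<1} x * ennreal (x powr (a-1) * (1-x) powr ((b+1)-1)) \<partial>lborel) / ennreal (Beta a b)"
    using assms
    apply (subst nn_integral_beta, simp_all)
    apply (intro arg_cong2[where f="(/)"] nn_integral_cong refl)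
    apply (auto simp: indicator_def ennreal_mult'[symmetric] powr_add powr_diff)
    done
  also have "\<dots> = ennreal (Beta a (b+1)) / ennreal (Beta a b)"
    using assms by (subst beta_nn) auto
  also have "\<dots> = ennreal (Beta a (b+1) / Beta a b)"
    using Beta_pos[OF assms] Beta_pos[of a "b+1"] assms by (simp add: divide_ennreal)
  also have "Beta a (b+1) / Beta a b = b / (a + b)"
  proof -
    have "(a + b) * Beta a (b + 1) = b * Beta a b"
      using assms by (intro Beta_plus1_right) (auto elim!: nonpos_Ints_cases)
    then show ?thesis using Beta_pos[OF assms] assms by (simp add: field_simps)
  qed
  finally show ?thesis .
qed


lemma bern_pmf: "bern q = measure_pmf (map_pmf (\<lambda>b. if b then 1 else 0) (bernoulli_pmf q))"
  by (simp add: bern_def)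

lemma sets_bern[simp]: "sets (bern q) = UNIV"
  by (simp add: bern_def)
lemma space_bern[simp]: "space (bern q) = UNIV"
  by (simp add: bern_def)
lemma prob_bern: "prob_space (bern q)"
  by (simp add: bern_def prob_space_measure_pmf)
lemma meas_bern1[measurable]: "f \<in> measurable (bern q) (count_space UNIV)"
  by (simp add: bern_def)
lemma meas_bern2[measurable]: "(f :: real \<Rightarrow> real) \<in> borel_measurable (bern q)"
  by (simp add: bern_def)

lemma AE_bern: "AE z in bern q. z = 0 \<or> z = 1"
  unfolding bern_def AE_measure_pmf_iff by auto

lemma nn_integral_bern:
  assumes "0 \<le> q" "q \<le> 1"
  shows "(\<integral>\<^sup>+z. f z \<partial>bern q) = ennreal q * f 1 + ennreal (1 - q) * f 0"
  using assms by (simp add: bern_def mult.commute)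

lemma bernoulli_compl: "0 \<le> q \<Longrightarrow> q \<le> 1 \<Longrightarrow> bernoulli_pmf (1 - q) = map_pmf Not (bernoulli_pmf q)"
proof (rule pmf_eqI)
  fix b assume "0 \<le> q" "q \<le> 1"
  have "pmf (map_pmf Not (bernoulli_pmf q)) (Not (Not b)) = pmf (bernoulli_pmf q) (Not b)"
    by (rule pmf_map_inj') (auto intro: injI)
  then show "pmf (bernoulli_pmf (1 - q)) b = pmf (map_pmf Not (bernoulli_pmf q)) b"
    using \<open>0 \<le> q\<close> \<open>q \<le> 1\<close> by (cases b) auto
qed

lemma distr_bern_flip:
  assumes "0 \<le> q" "q \<le> 1"
  shows "distr (bern q) (bern (1 - q)) (\<lambda>z. 1 - z) = bern (1 - q)"
proof -
  have "distr (bern q) (bern (1 - q)) (\<lambda>z. 1 - z) = distr (bern q) (count_space UNIV) (\<lambda>z. 1 - z)"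
    by (rule distr_cong) auto
  also have "\<dots> = measure_pmf (map_pmf (\<lambda>z::real. 1 - z) (map_pmf (\<lambda>b. if b then 1 else 0) (bernoulli_pmf q)))"
    by (simp add: bern_def map_pmf_rep_eq)
  also have "map_pmf (\<lambda>z::real. 1 - z) (map_pmf (\<lambda>b. if b then 1 else 0) (bernoulli_pmf q)) =
     map_pmf (\<lambda>b. if b then 1 else 0) (map_pmf Not (bernoulli_pmf q))"
    by (simp add: map_pmf_comp) (intro map_pmf_cong; auto)
  also have "\<dots> = map_pmf (\<lambda>b. if b then 1 else (0::real)) (bernoulli_pmf (1 - q))"
    using assms by (simp add: bernoulli_compl)
  finally show ?thesis by (simp add: bern_def)
qed

definition Mk :: "real \<Rightarrow> real \<Rightarrow> nat \<Rightarrow> (real \<times> real) measure" where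
  "Mk \<alpha> q k = beta_measure (1 - \<alpha>) (1 + real (Suc k) * \<alpha>) \<Otimes>\<^sub>M bern q"

definition PP :: "real \<Rightarrow> real \<Rightarrow> (nat \<Rightarrow> real \<times> real) measure" where
  "PP \<alpha> q = (\<Pi>\<^sub>M k\<in>(UNIV::nat set). Mk \<alpha> q k)"

definition Ssum :: "(nat \<Rightarrow> real \<times> real) \<Rightarrow> real" where
  "Ssum \<omega> = (\<Sum>k. stick_weight (\<lambda>j. fst (\<omega> j)) k * snd (\<omega> k))"

lemma PY1: "PY_mean_law \<alpha> 1 \<eta> = distr (\<Pi>\<^sub>M k\<in>(UNIV::nat set). beta_measure (1 - \<alpha>) (1 + real (Suc k) * \<alpha>) \<Otimes>\<^sub>M \<eta>) borel Ssum"
  by (simp add: PY_mean_law_def Ssum_def[abs_def])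

lemma PY1_bern: "PY_mean_law \<alpha> 1 (bern q) = distr (PP \<alpha> q) borel Ssum"
  by (simp add: PY1 PP_def Mk_def)

lemma prob_Mk: "0 < \<alpha> \<Longrightarrow> \<alpha> < 1 \<Longrightarrow> prob_space (Mk \<alpha> q k)"
  unfolding Mk_def
  by (intro prob_space_pair prob_beta prob_bern) (auto intro: add_pos_nonneg)

lemma sets_Mk[measurable_cong]: "sets (Mk \<alpha> q k) = sets (borel \<Otimes>\<^sub>M count_space UNIV)"
  unfolding Mk_def by (intro sets_pair_measure_cong) auto

lemma pps: "0 < \<alpha> \<Longrightarrow> \<alpha> < 1 \<Longrightarrow> product_prob_space (Mk \<alpha> q)"
  unfolding product_prob_space_def product_prob_space_axioms_def product_sigma_finite_def
  using prob_Mk by (auto intro: prob_space_imp_sigma_finite)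

lemma sw_meas[measurable]: "(\<lambda>\<omega>. stick_weight (\<lambda>j. fst (\<omega> j)) k) \<in> borel_measurable (PP \<alpha> q)"
  unfolding stick_weight_def PP_def by measurable

lemma snd_cs: "(\<lambda>x::real\<times>real. snd x) \<in> borel_measurable (borel \<Otimes>\<^sub>M count_space UNIV)"
  by (rule measurable_compose[OF measurable_snd]) simp

lemma snd_meas[measurable]: "(\<lambda>\<omega>. snd (\<omega> k)) \<in> borel_measurable (PP \<alpha> q)"
proof -
  have "(\<lambda>\<omega>. \<omega> k) \<in> measurable (PP \<alpha> q) (Mk \<alpha> q k)"
    unfolding PP_def by (rule measurable_component_singleton) simp
  moreover have "(\<lambda>x::real\<times>real. snd x) \<in> borel_measurable (Mk \<alpha> q k)"
    using snd_cs by (simp cong: measurable_cong_sets add: sets_Mk)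
  ultimately show ?thesis by (rule measurable_compose)
qed

lemma Ssum_meas[measurable]: "Ssum \<in> borel_measurable (PP \<alpha> q)"
  unfolding Ssum_def by measurable


definition flip :: "real \<times> real \<Rightarrow> real \<times> real" where
  "flip x = (fst x, 1 - snd x)"

lemma flip_meas: "flip \<in> measurable (Mk \<alpha> q k) (Mk \<alpha> q' k)"
proof -
  have "flip \<in> measurable (borel \<Otimes>\<^sub>M count_space UNIV) (borel \<Otimes>\<^sub>M count_space UNIV)"
    unfolding flip_def by (intro measurable_Pair) (auto intro: measurable_compose[OF measurable_snd])
  then show ?thesis by (simp cong: measurable_cong_sets add: sets_Mk)
qed

lemma distr_Mk_flip:
  assumes "0 \<le> q" "q \<le> 1"
  shows "distr (Mk \<alpha> q k) (Mk \<alpha> (1 - q) k) flip = Mk \<alpha> (1 - q) k"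
proof -
  let ?B = "beta_measure (1 - \<alpha>) (1 + real (Suc k) * \<alpha>)"
  have "distr ?B borel (\<lambda>x. x) \<Otimes>\<^sub>M distr (bern q) (bern (1 - q)) (\<lambda>z. 1 - z) =
     distr (?B \<Otimes>\<^sub>M bern q) (borel \<Otimes>\<^sub>M bern (1 - q)) (\<lambda>(x, y). (x, 1 - y))"
  proof (rule pair_measure_distr)
    show "(\<lambda>x. x) \<in> borel_measurable ?B" by (rule measurable_ident_sets) simp
    show "(\<lambda>z. 1 - z) \<in> measurable (bern q) (bern (1 - q))" by (simp add: bern_def)
    show "sigma_finite_measure (distr (bern q) (bern (1 - q)) (\<lambda>z. 1 - z))"
      using assms by (simp add: distr_bern_flip prob_bern prob_space_imp_sigma_finite)
  qed
  moreover have "distr ?B borel (\<lambda>x. x) = ?B" by (intro distr_id2) simp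
  ultimately have "Mk \<alpha> (1 - q) k = distr (?B \<Otimes>\<^sub>M bern q) (borel \<Otimes>\<^sub>M bern (1 - q)) (\<lambda>(x, y). (x, 1 - y))"
    by (simp add: distr_bern_flip assms Mk_def)
  also have "\<dots> = distr (Mk \<alpha> q k) (Mk \<alpha> (1 - q) k) flip"
    by (intro distr_cong) (auto simp: Mk_def flip_def split: prod.splits intro!: sets_pair_measure_cong)
  finally show ?thesis ..
qed

definition flipP :: "(nat \<Rightarrow> real \<times> real) \<Rightarrow> (nat \<Rightarrow> real \<times> real)" where
  "flipP \<omega> = (\<lambda>k. flip (\<omega> k))"

lemma coord_indep:
  assumes "0 < \<alpha>" "\<alpha> < 1"
  shows "prob_space.indep_vars (PP \<alpha> q) (Mk \<alpha> q) (\<lambda>k \<omega>. \<omega> k) UNIV"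
proof -
  interpret product_prob_space "Mk \<alpha> q" UNIV using pps[OF assms] .
  have r: "(\<lambda>i\<in>UNIV. x i) = x" for x :: "nat \<Rightarrow> real \<times> real" by (auto simp: restrict_def)
  show ?thesis
    unfolding PP_def
    by (subst indep_vars_iff_distr_eq_PiM) (auto simp: r PiM_component distr_id2)
qed

lemma distr_PP_flip:
  assumes "0 < \<alpha>" "\<alpha> < 1" "0 \<le> q" "q \<le> 1"
  shows "distr (PP \<alpha> q) (PP \<alpha> (1 - q)) flipP = PP \<alpha> (1 - q)"
proof -
  interpret product_prob_space "Mk \<alpha> q" UNIV using pps[OF assms(1,2)] .
  have "prob_space.indep_vars (PP \<alpha> q) (Mk \<alpha> (1 - q)) (\<lambda>k \<omega>. flip (\<omega> k)) UNIV"
    using coord_indep[OF assms(1,2), of q] unfolding PP_def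
    by (rule indep_vars_compose2) (rule flip_meas)
  then have "distr (PP \<alpha> q) (\<Pi>\<^sub>M i\<in>UNIV. Mk \<alpha> (1 - q) i) (\<lambda>x. \<lambda>i\<in>UNIV. flip (x i)) =
     (\<Pi>\<^sub>M i\<in>UNIV. distr (PP \<alpha> q) (Mk \<alpha> (1 - q) i) (\<lambda>x. flip (x i)))"
    unfolding PP_def
    by (subst (asm) indep_vars_iff_distr_eq_PiM)
       (auto intro!: measurable_compose[OF _ flip_meas] measurable_component_singleton)
  moreover have "distr (PP \<alpha> q) (Mk \<alpha> (1 - q) i) (\<lambda>x. flip (x i)) = Mk \<alpha> (1 - q) i" for i
  proof -
    have "distr (PP \<alpha> q) (Mk \<alpha> (1 - q) i) (\<lambda>x. flip (x i)) =
       distr (distr (PP \<alpha> q) (Mk \<alpha> q i) (\<lambda>x. x i)) (Mk \<alpha> (1 - q) i) flip"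
      unfolding PP_def by (subst distr_distr) (auto simp: comp_def intro: flip_meas)
    also have "\<dots> = Mk \<alpha> (1 - q) i"
      unfolding PP_def using assms by (simp add: PiM_component distr_Mk_flip)
    finally show ?thesis .
  qed
  moreover have "(\<lambda>x. \<lambda>i\<in>UNIV. flip (x i)) = flipP" by (auto simp: restrict_def flipP_def)
  ultimately show ?thesis by (simp add: PP_def)
qed


lemma AE_beta01: "AE x in beta_measure a b. 0 < x \<and> x < 1"
  unfolding beta_measure_def
  by (subst AE_density) (auto simp: beta_density_def intro!: AE_I2)

lemma AE_Mk:
  assumes "0 < \<alpha>" "\<alpha> < 1"
  shows "AE x in Mk \<alpha> q k. 0 < fst x \<and> fst x < 1 \<and> (snd x = 0 \<or> snd x = 1)"
proof -
  let ?B = "beta_measure (1 - \<alpha>) (1 + real (Suc k) * \<alpha>)"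
  interpret pair_sigma_finite ?B "bern q"
    unfolding pair_sigma_finite_def using assms
    by (auto intro!: prob_space_imp_sigma_finite prob_beta prob_bern add_pos_nonneg)
  have s: "{x \<in> space (?B \<Otimes>\<^sub>M bern q). 0 < fst x \<and> fst x < 1 \<and> (snd x = 0 \<or> snd x = 1)} \<in> sets (?B \<Otimes>\<^sub>M bern q)"
  proof -
    have "{x \<in> space (borel \<Otimes>\<^sub>M count_space UNIV). 0 < fst x \<and> fst x < (1::real) \<and> (snd x = (0::real) \<or> snd x = 1)}
       \<in> sets (borel \<Otimes>\<^sub>M count_space UNIV)"
      by measurable
    moreover have "sets (?B \<Otimes>\<^sub>M bern q) = sets (borel \<Otimes>\<^sub>M count_space UNIV)"
      by (intro sets_pair_measure_cong) auto
    moreover have "space (?B \<Otimes>\<^sub>M bern q) = space (borel \<Otimes>\<^sub>M count_space UNIV)"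
      by (simp add: space_pair_measure)
    ultimately show ?thesis by simp
  qed
  have "AE x in ?B \<Otimes>\<^sub>M bern q. 0 < fst x \<and> fst x < 1 \<and> (snd x = 0 \<or> snd x = 1)"
  proof (rule AE_pair_measure[OF s])
    show "AE x in ?B. AE y in bern q. 0 < fst (x, y) \<and> fst (x, y) < 1 \<and> (snd (x, y) = 0 \<or> snd (x, y) = 1)"
      using AE_beta01[of "1 - \<alpha>" "1 + real (Suc k) * \<alpha>"]
    proof eventually_elim
      case (elim x)
      show ?case using AE_bern[of q] by eventually_elim (use elim in auto)
    qed
  qed
  then show ?thesis unfolding Mk_def .
qed

lemma AE_PP:
  assumes "0 < \<alpha>" "\<alpha> < 1"
  shows "AE \<omega> in PP \<alpha> q. \<forall>k. 0 < fst (\<omega> k) \<and> fst (\<omega> k) < 1 \<and> (snd (\<omega> k) = 0 \<or> snd (\<omega> k) = 1)"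
  unfolding AE_all_countable PP_def
proof
  fix k
  show "AE \<omega> in Pi\<^sub>M UNIV (Mk \<alpha> q). 0 < fst (\<omega> k) \<and> fst (\<omega> k) < 1 \<and> (snd (\<omega> k) = 0 \<or> snd (\<omega> k) = 1)"
    by (rule AE_PiM_component[where M="Mk \<alpha> q" and P="\<lambda>x. 0 < fst x \<and> fst x < 1 \<and> (snd x = 0 \<or> snd x = 1)"])
       (rule prob_Mk[OF assms], simp, rule AE_Mk[OF assms])
qed

lemma telescope: "(\<Sum>k<n. stick_weight V k) = 1 - (\<Prod>j<n. 1 - V j)"
  by (induction n) (auto simp: stick_weight_def algebra_simps)


definition cc :: "real \<Rightarrow> nat \<Rightarrow> real" where
  "cc \<alpha> j = (1 + real (Suc j) * \<alpha>) / ((1 - \<alpha>) + (1 + real (Suc j) * \<alpha>))"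

lemma meas_beta_1m: "(\<lambda>x. ennreal (1 - x)) \<in> borel_measurable (beta_measure a b)"
  unfolding measurable_cong_sets[OF sets_beta refl] by simp

lemma E_coord:
  assumes "0 < \<alpha>" "\<alpha> < 1"
  shows "(\<integral>\<^sup>+\<omega>. ennreal (1 - fst (\<omega> j)) \<partial>PP \<alpha> q) = ennreal (cc \<alpha> j)"
proof -
  interpret product_prob_space "Mk \<alpha> q" UNIV using pps[OF assms] .
  interpret bp: prob_space "bern q" by (rule prob_bern)
  let ?B = "beta_measure (1 - \<alpha>) (1 + real (Suc j) * \<alpha>)"
  have h: "(\<lambda>x. ennreal (1 - fst x)) \<in> borel_measurable (Mk \<alpha> q j)"
    unfolding Mk_def by measurable
  have "(\<integral>\<^sup>+\<omega>. ennreal (1 - fst (\<omega> j)) \<partial>PP \<alpha> q) =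
     (\<integral>\<^sup>+x. ennreal (1 - fst x) \<partial>distr (PP \<alpha> q) (Mk \<alpha> q j) (\<lambda>\<omega>. \<omega> j))"
    unfolding PP_def by (rule nn_integral_distr[symmetric]) (auto intro: h)
  also have "\<dots> = (\<integral>\<^sup>+x. ennreal (1 - fst x) \<partial>Mk \<alpha> q j)"
    unfolding PP_def by (subst PiM_component) (rule UNIV_I, rule refl)
  also have "\<dots> = (\<integral>\<^sup>+x. ennreal (1 - x) \<partial>distr (?B \<Otimes>\<^sub>M bern q) ?B fst)"
  proof -
    have m: "(\<lambda>x. ennreal (1 - x)) \<in> borel_measurable (distr (?B \<Otimes>\<^sub>M bern q) ?B fst)"
      by (subst measurable_cong_sets[OF sets_distr refl]) (rule meas_beta_1m)
    show ?thesis
      unfolding Mk_def by (rule nn_integral_distr[OF measurable_fst m, symmetric])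
  qed
  also have "\<dots> = (\<integral>\<^sup>+x. ennreal (1 - x) \<partial>?B)"
    by (subst bp.distr_pair_fst) (rule refl)
  also have "\<dots> = ennreal (cc \<alpha> j)"
    unfolding cc_def using assms by (subst beta_mean_compl) (auto intro: add_pos_nonneg)
  finally show ?thesis .
qed

lemma prob_PP: "0 < \<alpha> \<Longrightarrow> \<alpha> < 1 \<Longrightarrow> prob_space (PP \<alpha> q)"
  unfolding PP_def by (intro prob_space_PiM prob_Mk)

lemma E_prod:
  assumes "0 < \<alpha>" "\<alpha> < 1"
  shows "(\<integral>\<^sup>+\<omega>. (\<Prod>j<n. ennreal (1 - fst (\<omega> j))) \<partial>PP \<alpha> q) = (\<Prod>j<n. ennreal (cc \<alpha> j))"
proof -
  interpret P: prob_space "PP \<alpha> q" by (rule prob_PP[OF assms])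
  have h: "(\<lambda>x. ennreal (1 - fst x)) \<in> borel_measurable (Mk \<alpha> q j)" for j
    by (simp add: Mk_def)
  have "P.indep_vars (\<lambda>_. borel) (\<lambda>j \<omega>. ennreal (1 - fst (\<omega> j))) UNIV"
    using coord_indep[OF assms, of q] by (rule P.indep_vars_compose2) (rule h)
  then have "P.indep_vars (\<lambda>_. borel) (\<lambda>j \<omega>. ennreal (1 - fst (\<omega> j))) {..<n}"
    by (rule P.indep_vars_subset) simp
  then have "(\<integral>\<^sup>+\<omega>. (\<Prod>j<n. ennreal (1 - fst (\<omega> j))) \<partial>PP \<alpha> q) = (\<Prod>j<n. \<integral>\<^sup>+\<omega>. ennreal (1 - fst (\<omega> j)) \<partial>PP \<alpha> q)"
    by (intro P.indep_vars_nn_integral) auto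
  also have "\<dots> = (\<Prod>j<n. ennreal (cc \<alpha> j))"
    using E_coord[OF assms] by simp
  finally show ?thesis .
qed

lemma harm_shift: "(\<Sum>j<n. 1 / real (Suc j)) = harm n"
  by (induction n) (simp add: harm_def, simp add: harm_Suc divide_inverse)

lemma cc_lim:
  assumes "0 < \<alpha>" "\<alpha> < 1"
  shows "(\<lambda>n. \<Prod>j<n. cc \<alpha> j) \<longlonglongrightarrow> 0"
proof (rule tendsto_sandwich[where f="\<lambda>_. 0"])
  have cpos: "0 \<le> cc \<alpha> j" for j using assms unfolding cc_def by (auto intro!: divide_nonneg_pos add_pos_nonneg)
  show "eventually (\<lambda>n. 0 \<le> (\<Prod>j<n. cc \<alpha> j)) sequentially"
    by (intro always_eventually allI prod_nonneg) (auto intro: cpos)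
  have cb: "cc \<alpha> j \<le> exp (- ((1 - \<alpha>) / 2 * (1 / real (Suc j))))" for j
  proof -
    have d: "0 < (1 - \<alpha>) + (1 + real (Suc j) * \<alpha>)" using assms by (auto intro: add_pos_nonneg)
    define D where "D = (1 - \<alpha>) + (1 + real (Suc j) * \<alpha>)"
    have dpos: "0 < D" using d by (simp add: D_def)
    have e1: "cc \<alpha> j = 1 - (1 - \<alpha>) / D"
      unfolding cc_def D_def using d by (simp add: field_simps)
    have "D \<le> 2 * real (Suc j)"
    proof -
      have "real j * \<alpha> \<le> real j" using assms by (simp add: mult_left_le)
      then show ?thesis unfolding D_def by (simp add: algebra_simps)
    qed
    then have "(1 - \<alpha>) / (2 * real (Suc j)) \<le> (1 - \<alpha>) / D"
      using assms dpos by (intro divide_left_mono) auto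
    then have e2: "(1 - \<alpha>) / 2 * (1 / real (Suc j)) \<le> (1 - \<alpha>) / D" by simp
    have "cc \<alpha> j \<le> 1 - (1 - \<alpha>) / 2 * (1 / real (Suc j))" using e1 e2 by simp
    also have "\<dots> \<le> exp (- ((1 - \<alpha>) / 2 * (1 / real (Suc j))))"
      using exp_ge_add_one_self[of "- ((1 - \<alpha>) / 2 * (1 / real (Suc j)))"] by simp
    finally show ?thesis .
  qed
  have "(\<Prod>j<n. cc \<alpha> j) \<le> (\<Prod>j<n. exp (- ((1 - \<alpha>) / 2 * (1 / real (Suc j)))))" for n
    by (intro prod_mono conjI cpos cb)
  also have "(\<Prod>j<n. exp (- ((1 - \<alpha>) / 2 * (1 / real (Suc j))))) = exp (- ((1 - \<alpha>) / 2 * harm n))" for n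
  proof -
    have "(\<Sum>j<n. - ((1 - \<alpha>) / 2 * (1 / real (Suc j)))) = - ((1 - \<alpha>) / 2 * harm n)"
      by (simp only: sum_negf sum_distrib_left[symmetric] harm_shift)
    then show ?thesis by (metis exp_sum finite_lessThan)
  qed
  finally show "eventually (\<lambda>n. (\<Prod>j<n. cc \<alpha> j) \<le> exp (- ((1 - \<alpha>) / 2 * harm n))) sequentially"
    by (intro always_eventually allI)
  have "filterlim (\<lambda>n. (1 - \<alpha>) / 2 * harm n) at_top sequentially"
    using assms by (intro filterlim_tendsto_pos_mult_at_top[OF tendsto_const _ harm_at_top]) auto
  then have "filterlim (\<lambda>n. - ((1 - \<alpha>) / 2 * harm n)) at_bot sequentially"
    by (simp add: filterlim_uminus_at_top)
  then show "(\<lambda>n. exp (- ((1 - \<alpha>) / 2 * harm n))) \<longlonglongrightarrow> 0"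
    by (rule filterlim_compose[OF exp_at_bot])
qed (simp)


lemma AE_R0:
  assumes "0 < \<alpha>" "\<alpha> < 1"
  shows "AE \<omega> in PP \<alpha> q. (\<lambda>n. \<Prod>j<n. 1 - fst (\<omega> j)) \<longlonglongrightarrow> 0"
proof -
  interpret P: prob_space "PP \<alpha> q" by (rule prob_PP[OF assms])
  define G where "G n (\<omega>::nat \<Rightarrow> real \<times> real) = (\<Prod>j<n. ennreal (1 - fst (\<omega> j)))" for n \<omega>
  have Gm[measurable]: "G n \<in> borel_measurable (PP \<alpha> q)" for n
    unfolding G_def PP_def by measurable
  have Im: "(\<lambda>\<omega>. INF n. G n \<omega>) \<in> borel_measurable (PP \<alpha> q)"
    by measurable
  have cpos: "0 \<le> cc \<alpha> j" for j using assms unfolding cc_def by (auto intro!: divide_nonneg_pos add_pos_nonneg)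
  have le: "(\<integral>\<^sup>+\<omega>. (INF m. G m \<omega>) \<partial>PP \<alpha> q) \<le> ennreal (\<Prod>j<n. cc \<alpha> j)" for n
  proof -
    have "(\<integral>\<^sup>+\<omega>. (INF m. G m \<omega>) \<partial>PP \<alpha> q) \<le> (\<integral>\<^sup>+\<omega>. G n \<omega> \<partial>PP \<alpha> q)"
      by (intro nn_integral_mono INF_lower) simp
    also have "\<dots> = (\<Prod>j<n. ennreal (cc \<alpha> j))"
      unfolding G_def by (rule E_prod[OF assms])
    also have "\<dots> = ennreal (\<Prod>j<n. cc \<alpha> j)"
      by (rule prod_ennreal) (rule cpos)
    finally show ?thesis .
  qed
  have lim: "(\<lambda>n. ennreal (\<Prod>j<n. cc \<alpha> j)) \<longlonglongrightarrow> 0"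
    using tendsto_ennrealI[OF cc_lim[OF assms]] by simp
  have "(\<integral>\<^sup>+\<omega>. (INF m. G m \<omega>) \<partial>PP \<alpha> q) \<le> 0"
    by (rule LIMSEQ_le_const[OF lim]) (use le in auto)
  then have "(\<integral>\<^sup>+\<omega>. (INF m. G m \<omega>) \<partial>PP \<alpha> q) = 0" by simp
  then have "AE \<omega> in PP \<alpha> q. (INF m. G m \<omega>) = 0"
    using nn_integral_0_iff_AE[OF Im] by simp
  then show ?thesis using AE_PP[OF assms, of q]
  proof eventually_elim
    case (elim \<omega>)
    let ?R = "\<lambda>n. \<Prod>j<n. 1 - fst (\<omega> j)"
    have Rnn: "0 \<le> ?R n" for n using elim(2) by (intro prod_nonneg) (auto simp: less_imp_le)
    have GR: "G n \<omega> = ennreal (?R n)" for n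
      unfolding G_def using elim(2) by (intro prod_ennreal) (auto simp: less_imp_le)
    have "decseq (\<lambda>n. ennreal (?R n))"
    proof (rule decseq_SucI)
      fix n
      have "?R (Suc n) = ?R n * (1 - fst (\<omega> n))" by simp
      also have "\<dots> \<le> ?R n" using elim(2) Rnn[of n] by (intro mult_left_le) (auto simp: less_imp_le)
      finally show "ennreal (?R (Suc n)) \<le> ennreal (?R n)" by (rule ennreal_leI)
    qed
    then have "(\<lambda>n. ennreal (?R n)) \<longlonglongrightarrow> (INF n. ennreal (?R n))" by (rule LIMSEQ_INF)
    then have "(\<lambda>n. ennreal (?R n)) \<longlonglongrightarrow> ennreal 0" using elim(1) by (simp add: GR)
    then show ?case using Rnn by (subst (asm) tendsto_ennreal_iff) auto
  qed
qed

lemma AE_flip: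
  assumes "0 < \<alpha>" "\<alpha> < 1"
  shows "AE \<omega> in PP \<alpha> q. Ssum (flipP \<omega>) = 1 - Ssum \<omega>"
  using AE_R0[OF assms, of q] AE_PP[OF assms, of q]
proof eventually_elim
  case (elim \<omega>)
  let ?V = "\<lambda>j. fst (\<omega> j)"
  let ?W = "\<lambda>k. stick_weight ?V k"
  have Wnn: "0 \<le> ?W k" for k
    unfolding stick_weight_def using elim(2) by (intro mult_nonneg_nonneg prod_nonneg) (auto simp: less_imp_le)
  have "(\<lambda>n. 1 - (\<Prod>j<n. 1 - ?V j)) \<longlonglongrightarrow> 1 - 0"
    by (intro tendsto_diff tendsto_const elim(1))
  then have Ws: "?W sums 1" unfolding sums_def telescope by simp
  then have Wsum: "summable ?W" by (rule sums_summable)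
  have WZ: "summable (\<lambda>k. ?W k * snd (\<omega> k))"
  proof (rule summable_comparison_test'[OF Wsum, of 0])
    fix n :: nat
    have "\<bar>snd (\<omega> n)\<bar> \<le> 1" using elim(2)[rule_format, of n] by auto
    then show "norm (?W n * snd (\<omega> n)) \<le> ?W n" using Wnn[of n] by (simp add: abs_mult mult_left_le)
  qed
  have "Ssum (flipP \<omega>) = (\<Sum>k. ?W k - ?W k * snd (\<omega> k))"
    unfolding Ssum_def flipP_def flip_def by (simp add: algebra_simps)
  also have "\<dots> = suminf ?W - (\<Sum>k. ?W k * snd (\<omega> k))"
    by (rule suminf_diff[OF Wsum WZ, symmetric])
  also have "\<dots> = 1 - Ssum \<omega>" unfolding Ssum_def using sums_unique[OF Ws] by simp
  finally show ?case .
qed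

lemma space_Mk: "space (Mk \<alpha> q k) = UNIV"
  by (simp add: Mk_def space_pair_measure)

lemma flipP_meas: "flipP \<in> measurable (PP \<alpha> q) (PP \<alpha> q')"
  unfolding flipP_def PP_def
proof (rule measurable_PiM_single')
  fix i :: nat
  show "(\<lambda>\<omega>. flip (\<omega> i)) \<in> measurable (Pi\<^sub>M UNIV (Mk \<alpha> q)) (Mk \<alpha> q' i)"
    by (rule measurable_compose[OF _ flip_meas]) (rule measurable_component_singleton, simp)
qed (auto simp: space_PiM space_Mk)

lemma PY_sym:
  assumes "0 < \<alpha>" "\<alpha> < 1" "0 \<le> q" "q \<le> 1"
  shows "distr (PY_mean_law \<alpha> 1 (bern q)) borel (\<lambda>m. 1 - m) = PY_mean_law \<alpha> 1 (bern (1 - q))"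
proof -
  have "PY_mean_law \<alpha> 1 (bern (1 - q)) = distr (distr (PP \<alpha> q) (PP \<alpha> (1 - q)) flipP) borel Ssum"
    by (simp add: PY1_bern distr_PP_flip assms)
  also have "\<dots> = distr (PP \<alpha> q) borel (\<lambda>\<omega>. Ssum (flipP \<omega>))"
    by (subst distr_distr) (auto simp: comp_def intro: flipP_meas)
  also have "\<dots> = distr (PP \<alpha> q) borel (\<lambda>\<omega>. 1 - Ssum \<omega>)"
    by (intro distr_cong_AE refl AE_flip assms) (auto intro: measurable_compose[OF flipP_meas])
  also have "\<dots> = distr (PY_mean_law \<alpha> 1 (bern q)) borel (\<lambda>m. 1 - m)"
    by (simp add: PY1_bern distr_distr comp_def)
  finally show ?thesis ..
qed


lemma Q_nn:
  fixes B M :: "real measure" and h :: "real \<times> real \<times> real \<Rightarrow> ennreal"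
  assumes sfM: "sigma_finite_measure M" and q: "0 \<le> q" "q \<le> 1" and spB: "space B = UNIV"
    and hm: "h \<in> borel_measurable (B \<Otimes>\<^sub>M (M \<Otimes>\<^sub>M bern q))"
  shows "(\<integral>\<^sup>+x. h x \<partial>(B \<Otimes>\<^sub>M (M \<Otimes>\<^sub>M bern q))) =
     ennreal q * (\<integral>\<^sup>+x. h (fst x, snd x, 1) \<partial>(B \<Otimes>\<^sub>M M)) +
     ennreal (1 - q) * (\<integral>\<^sup>+x. h (fst x, snd x, 0) \<partial>(B \<Otimes>\<^sub>M M))"
proof -
  interpret M: sigma_finite_measure M by (rule sfM)
  interpret Bq: sigma_finite_measure "bern q" by (rule prob_space_imp_sigma_finite[OF prob_bern])
  interpret MB: pair_sigma_finite M "bern q" ..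
  have sfMB: "sigma_finite_measure (M \<Otimes>\<^sub>M bern q)"
    by (rule sigma_finite_pair_measure[OF sfM Bq.sigma_finite_measure_axioms])
  have e: "(\<lambda>x. (fst x, snd x, c)) \<in> measurable (B \<Otimes>\<^sub>M M) (B \<Otimes>\<^sub>M (M \<Otimes>\<^sub>M bern q))" for c :: real
    by (intro measurable_Pair measurable_fst measurable_snd measurable_const) auto
  have hc: "(\<lambda>x. h (fst x, snd x, c)) \<in> borel_measurable (B \<Otimes>\<^sub>M M)" for c :: real
    using measurable_compose[OF e hm] .
  have hc2: "(\<lambda>m. h (b, m, c)) \<in> borel_measurable M" for b c :: real
    using measurable_Pair2[OF hc, of b] by (simp add: space_pair_measure spB)
  have hb: "(\<lambda>y. h (b, y)) \<in> borel_measurable (M \<Otimes>\<^sub>M bern q)" for b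
    by (rule measurable_Pair2[OF hm]) (simp add: spB)
  have X: "(\<lambda>b. \<integral>\<^sup>+m. h (b, m, c) \<partial>M) \<in> borel_measurable B" for c :: real
    using M.borel_measurable_nn_integral_fst[OF hc[of c]] by simp
  have "(\<integral>\<^sup>+x. h x \<partial>(B \<Otimes>\<^sub>M (M \<Otimes>\<^sub>M bern q))) = (\<integral>\<^sup>+b. \<integral>\<^sup>+y. h (b, y) \<partial>(M \<Otimes>\<^sub>M bern q) \<partial>B)"
    by (rule sigma_finite_measure.nn_integral_fst[OF sfMB hm, symmetric])
  also have "\<dots> = (\<integral>\<^sup>+b. \<integral>\<^sup>+m. \<integral>\<^sup>+w. h (b, m, w) \<partial>bern q \<partial>M \<partial>B)"
    by (intro nn_integral_cong Bq.nn_integral_fst[symmetric] hb)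
  also have "\<dots> = (\<integral>\<^sup>+b. \<integral>\<^sup>+m. ennreal q * h (b, m, 1) + ennreal (1 - q) * h (b, m, 0) \<partial>M \<partial>B)"
    using q by (simp add: nn_integral_bern)
  also have "\<dots> = (\<integral>\<^sup>+b. ennreal q * (\<integral>\<^sup>+m. h (b, m, 1) \<partial>M) + ennreal (1 - q) * (\<integral>\<^sup>+m. h (b, m, 0) \<partial>M) \<partial>B)"
  proof (intro nn_integral_cong)
    fix b
    show "(\<integral>\<^sup>+m. ennreal q * h (b, m, 1) + ennreal (1 - q) * h (b, m, 0) \<partial>M) =
      ennreal q * (\<integral>\<^sup>+m. h (b, m, 1) \<partial>M) + ennreal (1 - q) * (\<integral>\<^sup>+m. h (b, m, 0) \<partial>M)"
    proof -
      have a1: "(\<integral>\<^sup>+m. ennreal c' * h (b, m, c) \<partial>M) = ennreal c' * (\<integral>\<^sup>+m. h (b, m, c) \<partial>M)" for c c'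
        by (rule nn_integral_cmult[OF hc2])
      have add: "(\<integral>\<^sup>+m. ennreal q * h (b, m, 1) + ennreal (1 - q) * h (b, m, 0) \<partial>M) =
          (\<integral>\<^sup>+m. ennreal q * h (b, m, 1) \<partial>M) + (\<integral>\<^sup>+m. ennreal (1 - q) * h (b, m, 0) \<partial>M)"
        by (rule nn_integral_add) (rule borel_measurable_times_ennreal[OF measurable_const hc2], simp)+
      show ?thesis by (simp only: add a1)
    qed
  qed
  also have "\<dots> = ennreal q * (\<integral>\<^sup>+b. \<integral>\<^sup>+m. h (b, m, 1) \<partial>M \<partial>B) + ennreal (1 - q) * (\<integral>\<^sup>+b. \<integral>\<^sup>+m. h (b, m, 0) \<partial>M \<partial>B)"
  proof -
    have a1: "(\<integral>\<^sup>+b. ennreal c' * (\<integral>\<^sup>+m. h (b, m, c) \<partial>M) \<partial>B) = ennreal c' * (\<integral>\<^sup>+b. \<integral>\<^sup>+m. h (b, m, c) \<partial>M \<partial>B)" for c c'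
      by (rule nn_integral_cmult[OF X])
    have add: "(\<integral>\<^sup>+b. ennreal q * (\<integral>\<^sup>+m. h (b, m, 1) \<partial>M) + ennreal (1 - q) * (\<integral>\<^sup>+m. h (b, m, 0) \<partial>M) \<partial>B) =
        (\<integral>\<^sup>+b. ennreal q * (\<integral>\<^sup>+m. h (b, m, 1) \<partial>M) \<partial>B) + (\<integral>\<^sup>+b. ennreal (1 - q) * (\<integral>\<^sup>+m. h (b, m, 0) \<partial>M) \<partial>B)"
      by (rule nn_integral_add) (rule borel_measurable_times_ennreal[OF measurable_const X], simp)+
    show ?thesis by (simp only: add a1)
  qed
  finally have r: "(\<integral>\<^sup>+x. h x \<partial>(B \<Otimes>\<^sub>M (M \<Otimes>\<^sub>M bern q))) = ennreal q * (\<integral>\<^sup>+b. \<integral>\<^sup>+m. h (b, m, 1) \<partial>M \<partial>B) + ennreal (1 - q) * (\<integral>\<^sup>+b. \<integral>\<^sup>+m. h (b, m, 0) \<partial>M \<partial>B)" .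
  have F: "(\<integral>\<^sup>+b. \<integral>\<^sup>+m. h (b, m, c) \<partial>M \<partial>B) = (\<integral>\<^sup>+x. h (fst x, snd x, c) \<partial>(B \<Otimes>\<^sub>M M))" for c :: real
    using M.nn_integral_fst[OF hc[of c]] by simp
  show ?thesis unfolding r F ..
qed

lemma pair_distr_nn:
  fixes B M :: "real measure" and h :: "real \<times> real \<Rightarrow> ennreal"
  assumes sB: "sets B = sets borel" and gm: "g \<in> borel_measurable M"
    and sf: "sigma_finite_measure (distr M borel g)"
    and hm: "h \<in> borel_measurable (borel \<Otimes>\<^sub>M borel)"
  shows "(\<integral>\<^sup>+x. h x \<partial>(B \<Otimes>\<^sub>M distr M borel g)) = (\<integral>\<^sup>+x. h (fst x, g (snd x)) \<partial>(B \<Otimes>\<^sub>M M))"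
proof -
  have idm: "(\<lambda>x. x) \<in> measurable B borel" using sB by (intro measurable_ident_sets)
  have "distr B borel (\<lambda>x. x) \<Otimes>\<^sub>M distr M borel g = distr (B \<Otimes>\<^sub>M M) (borel \<Otimes>\<^sub>M borel) (\<lambda>(x, y). (x, g y))"
    by (rule pair_measure_distr[OF idm gm sf])
  moreover have "distr B borel (\<lambda>x. x) = B" using sB by (intro distr_id2) simp
  ultimately have eq: "B \<Otimes>\<^sub>M distr M borel g = distr (B \<Otimes>\<^sub>M M) (borel \<Otimes>\<^sub>M borel) (\<lambda>(x, y). (x, g y))" by simp
  have Tm: "(\<lambda>(x, y). (x, g y)) \<in> measurable (B \<Otimes>\<^sub>M M) (borel \<Otimes>\<^sub>M borel)"
    using idm gm by (auto intro!: measurable_Pair measurable_compose[OF measurable_fst] measurable_compose[OF measurable_snd] simp: split_beta')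
  have hm': "h \<in> borel_measurable (distr (B \<Otimes>\<^sub>M M) (borel \<Otimes>\<^sub>M borel) (\<lambda>(x, y). (x, g y)))"
    by (subst measurable_cong_sets[OF sets_distr refl]) (rule hm)
  show ?thesis unfolding eq
    by (subst nn_integral_distr[OF Tm hm']) (simp add: split_beta')
qed


lemma prod_density_nn:
  fixes B :: "real measure" and g :: "real \<Rightarrow> ennreal" and h :: "real \<times> real \<Rightarrow> ennreal"
  assumes sB: "sets B = sets borel" and gm: "g \<in> borel_measurable borel"
    and sf: "sigma_finite_measure (density lborel g)"
    and hm: "h \<in> borel_measurable (borel \<Otimes>\<^sub>M borel)"
  shows "(\<integral>\<^sup>+x. h x \<partial>(B \<Otimes>\<^sub>M density lborel g)) = (\<integral>\<^sup>+b. (\<integral>\<^sup>+m. g m * h (b, m) \<partial>lborel) \<partial>B)"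
proof -
  have ss: "sets (B \<Otimes>\<^sub>M density lborel g) = sets (borel \<Otimes>\<^sub>M borel)"
    using sB by (intro sets_pair_measure_cong) auto
  have hm': "h \<in> borel_measurable (B \<Otimes>\<^sub>M density lborel g)"
    by (subst measurable_cong_sets[OF ss refl]) (rule hm)
  have "(\<integral>\<^sup>+x. h x \<partial>(B \<Otimes>\<^sub>M density lborel g)) = (\<integral>\<^sup>+b. (\<integral>\<^sup>+m. h (b, m) \<partial>density lborel g) \<partial>B)"
    by (rule sigma_finite_measure.nn_integral_fst[OF sf hm', symmetric])
  also have "\<dots> = (\<integral>\<^sup>+b. (\<integral>\<^sup>+m. g m * h (b, m) \<partial>lborel) \<partial>B)"
  proof (intro nn_integral_cong)
    fix b
    have "(\<lambda>m. h (b, m)) \<in> borel_measurable borel"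
      by (rule measurable_Pair2[OF hm]) simp
    then show "(\<integral>\<^sup>+m. h (b, m) \<partial>density lborel g) = (\<integral>\<^sup>+m. g m * h (b, m) \<partial>lborel)"
      by (subst nn_integral_density) (auto simp: gm)
  qed
  finally show ?thesis .
qed

lemma subst0:
  fixes f :: "real \<Rightarrow> real"
  assumes b: "0 < b" and fm: "f \<in> borel_measurable borel" and A: "A \<in> sets borel"
  shows "(\<integral>\<^sup>+m. ennreal (f m) * indicator A (b * m) \<partial>lborel) =
    ennreal (1 / b) * (\<integral>\<^sup>+t. ennreal (f (t / b)) * indicator A t \<partial>lborel)"
proof -
  have Fm: "(\<lambda>m. ennreal (f m) * indicator A (b * m)) \<in> borel_measurable borel"
    using fm A by measurable
  have "(\<integral>\<^sup>+m. ennreal (f m) * indicator A (b * m) \<partial>lborel) =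
      ennreal \<bar>1 / b\<bar> * (\<integral>\<^sup>+x. ennreal (f (0 + 1 / b * x)) * indicator A (b * (0 + 1 / b * x)) \<partial>lborel)"
    using nn_integral_real_affine[OF Fm, of "1 / b" 0] b by simp
  also have "\<dots> = ennreal (1 / b) * (\<integral>\<^sup>+t. ennreal (f (t / b)) * indicator A t \<partial>lborel)"
    using b by simp
  finally show ?thesis .
qed

lemma subst1:
  fixes f :: "real \<Rightarrow> real"
  assumes b: "0 < b" and fm: "f \<in> borel_measurable borel" and A: "A \<in> sets borel"
  shows "(\<integral>\<^sup>+m. ennreal (f m) * indicator A (1 - b * m) \<partial>lborel) =
    ennreal (1 / b) * (\<integral>\<^sup>+t. ennreal (f ((1 - t) / b)) * indicator A t \<partial>lborel)"
proof -
  have Fm: "(\<lambda>m. ennreal (f m) * indicator A (1 - b * m)) \<in> borel_measurable borel"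
    using fm A by measurable
  have "(\<integral>\<^sup>+m. ennreal (f m) * indicator A (1 - b * m) \<partial>lborel) =
      ennreal \<bar>- 1 / b\<bar> * (\<integral>\<^sup>+x. ennreal (f (1 / b + (- 1 / b) * x)) * indicator A (1 - b * (1 / b + (- 1 / b) * x)) \<partial>lborel)"
    using nn_integral_real_affine[OF Fm, of "- 1 / b" "1 / b"] b by simp
  also have "\<dots> = ennreal (1 / b) * (\<integral>\<^sup>+t. ennreal (f ((1 - t) / b)) * indicator A t \<partial>lborel)"
    using b by (simp add: diff_divide_distrib right_diff_distrib)
  finally show ?thesis .
qed

lemma Beta_1: "0 < a \<Longrightarrow> Beta 1 a = 1 / (a::real)"
proof -
  assume a: "0 < a"
  have "Gamma (a + 1) = a * Gamma a" using a by (intro Gamma_plus1) (auto elim!: nonpos_Ints_cases)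
  moreover have g: "Gamma a \<noteq> 0" using Gamma_real_pos[OF a] by linarith
  ultimately show ?thesis unfolding Beta_def by (simp add: add.commute)
qed

lemma beta_density_B:
  assumes "0 < \<alpha>" "\<alpha> < 1"
  shows "beta_density 1 (1 - \<alpha>) u = indicator {0<..<1} u * ennreal ((1 - \<alpha>) * (1 - u) powr (- \<alpha>))"
  using assms by (auto simp: beta_density_def Beta_1 indicator_def mult.commute)


lemma ww_meas: "(\<lambda>x::real\<times>real\<times>real. snd (snd x)) \<in> borel_measurable (borel \<Otimes>\<^sub>M (borel \<Otimes>\<^sub>M count_space UNIV))"
  by (rule measurable_compose[OF measurable_snd snd_cs])

lemma Y_meas: "(\<lambda>(b, m, w). b * m + (1 - b) * (w::real)) \<in> borel_measurable (borel \<Otimes>\<^sub>M (borel \<Otimes>\<^sub>M count_space UNIV))"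
proof -
  have f1: "(\<lambda>x::real\<times>real\<times>real. fst x) \<in> borel_measurable (borel \<Otimes>\<^sub>M (borel \<Otimes>\<^sub>M count_space UNIV))"
    by (rule measurable_fst)
  have f2: "(\<lambda>x::real\<times>real\<times>real. fst (snd x)) \<in> borel_measurable (borel \<Otimes>\<^sub>M (borel \<Otimes>\<^sub>M count_space UNIV))"
    by (rule measurable_compose[OF measurable_snd measurable_fst])
  have "(\<lambda>x::real\<times>real\<times>real. fst x * fst (snd x) + (1 - fst x) * snd (snd x)) \<in> borel_measurable (borel \<Otimes>\<^sub>M (borel \<Otimes>\<^sub>M count_space UNIV))"
    by (intro borel_measurable_add borel_measurable_times borel_measurable_diff borel_measurable_const f1 f2 ww_meas)
  then show ?thesis unfolding case_prod_unfold .
qed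

lemma W_meas: "(\<lambda>(b::real, m::real, w::real). w) \<in> borel_measurable (borel \<Otimes>\<^sub>M (borel \<Otimes>\<^sub>M count_space UNIV))"
  using ww_meas unfolding case_prod_unfold .

lemma ennreal_ptw:
  fixes a b c :: real and i :: ennreal
  assumes "0 \<le> a" "0 \<le> b" "0 \<le> c"
  shows "ennreal a * (ennreal b * (ennreal c * i)) = i * ennreal (a * b * c)"
  using assms by (simp add: ennreal_mult mult_ac)

lemma dens_aux:
  fixes f \<phi> :: "real \<Rightarrow> real" and \<psi> :: "real \<Rightarrow> real \<Rightarrow> real" and g :: "real \<times> real \<Rightarrow> real"
  assumes a: "0 < \<alpha>" "\<alpha> < 1"
    and fm: "f \<in> borel_measurable borel"
    and sf: "sigma_finite_measure (density lborel (\<lambda>x. ennreal (f x)))"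
    and A: "A \<in> sets borel"
    and gm: "g \<in> borel_measurable (borel \<Otimes>\<^sub>M borel)"
    and sub: "\<And>u. 0 < u \<Longrightarrow> (\<integral>\<^sup>+m. ennreal (f m) * indicator A (g (u, m)) \<partial>lborel) =
                 ennreal (1 / u) * (\<integral>\<^sup>+t. ennreal (\<psi> u t) * indicator A t \<partial>lborel)"
    and \<psi>nn: "\<And>u t. 0 \<le> \<psi> u t" and \<psi>m: "\<And>u. \<psi> u \<in> borel_measurable borel"
  shows "(\<integral>\<^sup>+x. indicator A (g x) \<partial>(beta_measure 1 (1 - \<alpha>) \<Otimes>\<^sub>M density lborel (\<lambda>x. ennreal (f x)))) =
    (\<integral>\<^sup>+u. \<integral>\<^sup>+t. indicator {0<..<1} u * (indicator A t * ennreal ((1 - \<alpha>) * (1 - u) powr (- \<alpha>) * (1 / u) * \<psi> u t)) \<partial>lborel \<partial>lborel)"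
proof -
  have hm: "(\<lambda>x. indicator A (g x)) \<in> borel_measurable (borel \<Otimes>\<^sub>M borel)"
    by (rule measurable_compose[OF gm borel_measurable_indicator[OF A]])
  have "(\<integral>\<^sup>+x. indicator A (g x) \<partial>(beta_measure 1 (1 - \<alpha>) \<Otimes>\<^sub>M density lborel (\<lambda>x. ennreal (f x)))) =
      (\<integral>\<^sup>+b. (\<integral>\<^sup>+m. ennreal (f m) * indicator A (g (b, m)) \<partial>lborel) \<partial>beta_measure 1 (1 - \<alpha>))"
    by (rule prod_density_nn[OF _ _ sf hm]) (simp_all add: measurable_compose[OF fm measurable_ennreal])
  also have "\<dots> = (\<integral>\<^sup>+b. beta_density 1 (1 - \<alpha>) b * (\<integral>\<^sup>+m. ennreal (f m) * indicator A (g (b, m)) \<partial>lborel) \<partial>lborel)"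
  proof -
    have jm: "(\<lambda>(b, m). ennreal (f m) * indicator A (g (b, m))) \<in> borel_measurable (lborel \<Otimes>\<^sub>M lborel)"
    proof -
      have "(\<lambda>x. ennreal (f (snd x)) * indicator A (g x)) \<in> borel_measurable (borel \<Otimes>\<^sub>M borel)"
        by (intro borel_measurable_times_ennreal measurable_compose[OF measurable_snd] hm) (rule measurable_compose[OF fm measurable_ennreal])
      then show ?thesis
        by (subst measurable_cong_sets[of _ "borel \<Otimes>\<^sub>M borel" borel borel])
           (auto intro!: sets_pair_measure_cong simp: case_prod_unfold)
    qed
    have "(\<lambda>b. \<integral>\<^sup>+m. ennreal (f m) * indicator A (g (b, m)) \<partial>lborel) \<in> borel_measurable lborel"
      using lborel.borel_measurable_nn_integral[OF jm] .
    then show ?thesis unfolding beta_measure_def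
      by (subst nn_integral_density) (auto simp: measurable_cong_sets[OF sets_lborel refl])
  qed
  also have "\<dots> = (\<integral>\<^sup>+u. \<integral>\<^sup>+t. indicator {0<..<1} u * (indicator A t * ennreal ((1 - \<alpha>) * (1 - u) powr (- \<alpha>) * (1 / u) * \<psi> u t)) \<partial>lborel \<partial>lborel)"
  proof (intro nn_integral_cong)
    fix u :: real
    show "beta_density 1 (1 - \<alpha>) u * (\<integral>\<^sup>+m. ennreal (f m) * indicator A (g (u, m)) \<partial>lborel) =
      (\<integral>\<^sup>+t. indicator {0<..<1} u * (indicator A t * ennreal ((1 - \<alpha>) * (1 - u) powr (- \<alpha>) * (1 / u) * \<psi> u t)) \<partial>lborel)"
    proof (cases "u \<in> {0<..<1}")
      case True
      then have u: "0 < u" "u < 1" by auto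
      have "beta_density 1 (1 - \<alpha>) u * (\<integral>\<^sup>+m. ennreal (f m) * indicator A (g (u, m)) \<partial>lborel) =
          ennreal ((1 - \<alpha>) * (1 - u) powr (- \<alpha>)) * (ennreal (1 / u) * (\<integral>\<^sup>+t. ennreal (\<psi> u t) * indicator A t \<partial>lborel))"
        using True a by (simp add: beta_density_B sub[OF u(1)])
      also have "\<dots> = (\<integral>\<^sup>+t. ennreal ((1 - \<alpha>) * (1 - u) powr (- \<alpha>)) * (ennreal (1 / u) * (ennreal (\<psi> u t) * indicator A t)) \<partial>lborel)"
      proof -
        have Fm: "(\<lambda>t. ennreal (\<psi> u t) * indicator A t) \<in> borel_measurable lborel"
          unfolding measurable_cong_sets[OF sets_lborel refl]
          by (intro borel_measurable_times_ennreal measurable_compose[OF \<psi>m measurable_ennreal] borel_measurable_indicator A)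
        have Fm2: "(\<lambda>t. ennreal (1 / u) * (ennreal (\<psi> u t) * indicator A t)) \<in> borel_measurable lborel"
          by (rule borel_measurable_times_ennreal[OF measurable_const Fm]) simp
        show ?thesis by (simp only: nn_integral_cmult[OF Fm2] nn_integral_cmult[OF Fm])
      qed
      also have "\<dots> = (\<integral>\<^sup>+t. indicator {0<..<1} u * (indicator A t * ennreal ((1 - \<alpha>) * (1 - u) powr (- \<alpha>) * (1 / u) * \<psi> u t)) \<partial>lborel)"
      proof (intro nn_integral_cong)
        fix t
        have "ennreal ((1 - \<alpha>) * (1 - u) powr (- \<alpha>)) * (ennreal (1 / u) * (ennreal (\<psi> u t) * indicator A t)) =
            indicator A t * ennreal ((1 - \<alpha>) * (1 - u) powr (- \<alpha>) * (1 / u) * \<psi> u t)"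
          using a u \<psi>nn[of u t] by (subst ennreal_ptw) auto
        then show "ennreal ((1 - \<alpha>) * (1 - u) powr (- \<alpha>)) * (ennreal (1 / u) * (ennreal (\<psi> u t) * indicator A t)) =
            indicator {0<..<1} u * (indicator A t * ennreal ((1 - \<alpha>) * (1 - u) powr (- \<alpha>) * (1 / u) * \<psi> u t))"
          using True by simp
      qed
      finally show ?thesis .
    next
      case False
      then show ?thesis using a by (simp add: beta_density_B)
    qed
  qed
  finally show ?thesis .
qed

lemma ennreal_comb:
  fixes p a b :: real and i :: ennreal
  assumes "0 \<le> p" "p \<le> 1" "0 \<le> a" "0 \<le> b"
  shows "ennreal p * (i * ennreal a) + ennreal (1 - p) * (i * ennreal b) = i * ennreal (p * a + (1 - p) * b)"
proof -
  have "ennreal (p * a + (1 - p) * b) = ennreal p * ennreal a + ennreal (1 - p) * ennreal b"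
    using assms by (simp add: ennreal_plus ennreal_mult)
  then show ?thesis by (simp add: distrib_left mult_ac)
qed

lemma ring_id:
  fixes p \<alpha> X v a b :: real
  shows "p * ((1 - \<alpha>) * X * v * b) + (1 - p) * ((1 - \<alpha>) * X * v * a) = (1 - \<alpha>) * (((1 - p) * a + p * b) * v * X)"
  by (simp add: algebra_simps)

theorem corollary6p1:
  fixes \<alpha> p :: real and f1 f2 :: "real \<Rightarrow> real"
  assumes "0 < \<alpha>" "\<alpha> < 1" "0 < p" "p < 1"
    and ident: "PY_mean_law \<alpha> (1 - \<alpha>) (bern p) =
       distr (beta_measure 1 (1 - \<alpha>) \<Otimes>\<^sub>M (PY_mean_law \<alpha> 1 (bern p) \<Otimes>\<^sub>M bern p)) borel
             (\<lambda>(b, m, w). b * m + (1 - b) * w)"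
    and f1_meas: "f1 \<in> borel_measurable borel"
    and f1_nonneg: "\<And>x. 0 \<le> f1 x"
    and f1_supp: "\<And>x. x \<notin> {0<..<1} \<Longrightarrow> f1 x = 0"
    and f1_dens: "PY_mean_law \<alpha> 1 (bern p) = density lborel (\<lambda>x. ennreal (f1 x))"
    and f2_meas: "f2 \<in> borel_measurable borel"
    and f2_nonneg: "\<And>x. 0 \<le> f2 x"
    and f2_supp: "\<And>x. x \<notin> {0<..<1} \<Longrightarrow> f2 x = 0"
    and f2_dens: "PY_mean_law \<alpha> 1 (bern (1 - p)) = density lborel (\<lambda>x. ennreal (f2 x))"
  shows
    "(let Q = beta_measure 1 (1 - \<alpha>) \<Otimes>\<^sub>M (PY_mean_law \<alpha> 1 (bern p) \<Otimes>\<^sub>M bern p);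
          Y = (\<lambda>(b, m, w). b * m + (1 - b) * w);
          W = (\<lambda>(b::real, m::real, w::real). w)
      in (\<forall>A \<in> sets borel.
            measure Q {x \<in> space Q. Y x \<in> A \<and> W x = 1} / measure Q {x \<in> space Q. W x = 1}
            = measure (distr (beta_measure 1 (1 - \<alpha>) \<Otimes>\<^sub>M PY_mean_law \<alpha> 1 (bern (1 - p))) borel
                         (\<lambda>(b, m). 1 - b * m)) A)
       \<and> (\<forall>A \<in> sets borel.
            measure Q {x \<in> space Q. Y x \<in> A \<and> W x = 0} / measure Q {x \<in> space Q. W x = 0}
            = measure (distr (beta_measure 1 (1 - \<alpha>) \<Otimes>\<^sub>M PY_mean_law \<alpha> 1 (bern p)) borel
                         (\<lambda>(b, m). b * m)) A))
     \<and> PY_mean_law \<alpha> (1 - \<alpha>) (bern p) =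
        density lborel (\<lambda>t. ennreal (1 - \<alpha>) *
          (\<integral>\<^sup>+ u. indicator {0<..<1} u *
              ennreal (((1 - p) * f1 (t / u) + p * f2 ((1 - t) / u)) * (1 / u) * (1 - u) powr (- \<alpha>))
           \<partial>lborel))"
  proof -
  note assms_all = assms
  define B where "B = beta_measure 1 (1 - \<alpha>)"
  define M1 where "M1 = PY_mean_law \<alpha> 1 (bern p)"
  define M2 where "M2 = PY_mean_law \<alpha> 1 (bern (1 - p))"
  define Q where "Q = B \<Otimes>\<^sub>M (M1 \<Otimes>\<^sub>M bern p)"
  define Y :: "real \<times> real \<times> real \<Rightarrow> real" where "Y = (\<lambda>(b, m, w). b * m + (1 - b) * w)"
  define W :: "real \<times> real \<times> real \<Rightarrow> real" where "W = (\<lambda>(b, m, w). w)"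
  have a: "0 < \<alpha>" "\<alpha> < 1" "0 < p" "p < 1" using assms by auto
  have pB: "prob_space B" unfolding B_def using a by (intro prob_beta) auto
  have pM: "prob_space (PY_mean_law \<alpha> 1 (bern q))" for q
    unfolding PY1_bern by (rule prob_space.prob_space_distr[OF prob_PP[OF a(1,2)] Ssum_meas])
  have pM1: "prob_space M1" unfolding M1_def by (rule pM)
  have pM2: "prob_space M2" unfolding M2_def by (rule pM)
  have sB: "sets B = sets borel" unfolding B_def by simp
  have sM1: "sets M1 = sets borel" unfolding M1_def PY1_bern by simp
  have sM2: "sets M2 = sets borel" unfolding M2_def PY1_bern by simp
  have spB: "space B = UNIV" unfolding B_def by simp
  have spM1: "space M1 = UNIV" unfolding M1_def PY1_bern by simp
  have sQ: "sets Q = sets (borel \<Otimes>\<^sub>M (borel \<Otimes>\<^sub>M count_space UNIV))"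
    unfolding Q_def using sB sM1 by (intro sets_pair_measure_cong) auto
  have spQ: "space Q = UNIV" unfolding Q_def by (simp add: space_pair_measure spB spM1)
  have Ym: "Y \<in> borel_measurable Q"
    unfolding Y_def by (subst measurable_cong_sets[OF sQ refl]) (rule Y_meas)
  have Wm: "W \<in> borel_measurable Q"
    unfolding W_def by (subst measurable_cong_sets[OF sQ refl]) (rule W_meas)
  have sym: "M2 = distr M1 borel (\<lambda>m. 1 - m)"
    unfolding M1_def M2_def using a by (intro PY_sym[symmetric]) auto
  have sfM1: "sigma_finite_measure M1" by (rule prob_space_imp_sigma_finite[OF pM1])
  have sfM2: "sigma_finite_measure M2" by (rule prob_space_imp_sigma_finite[OF pM2])
  interpret BM1: pair_prob_space B M1 unfolding pair_prob_space_def pair_sigma_finite_def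
    using pB pM1 by (auto intro: prob_space_imp_sigma_finite)
  have sBM: "sets (B \<Otimes>\<^sub>M M1) = sets (borel \<Otimes>\<^sub>M borel)"
    using sB sM1 by (intro sets_pair_measure_cong) auto

  define I1 where "I1 A = (\<integral>\<^sup>+x. indicator A (fst x * snd x + (1 - fst x)) \<partial>(B \<Otimes>\<^sub>M M1))" for A
  define I0 where "I0 A = (\<integral>\<^sup>+x. indicator A (fst x * snd x) \<partial>(B \<Otimes>\<^sub>M M1))" for A

  have QY: "(\<integral>\<^sup>+x. h (Y x) * indicator C (W x) \<partial>Q) =
      ennreal p * (\<integral>\<^sup>+x. h (fst x * snd x + (1 - fst x)) \<partial>(B \<Otimes>\<^sub>M M1)) * indicator C 1 +
      ennreal (1 - p) * (\<integral>\<^sup>+x. h (fst x * snd x) \<partial>(B \<Otimes>\<^sub>M M1)) * indicator C 0"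
    if hm: "h \<in> borel_measurable borel" and C: "C \<in> sets borel" for h :: "real \<Rightarrow> ennreal" and C
  proof -
    have m: "(\<lambda>x. h (Y x) * indicator C (W x)) \<in> borel_measurable Q"
      by (intro borel_measurable_times_ennreal measurable_compose[OF Ym hm]
                measurable_compose[OF Wm borel_measurable_indicator] C)
    have "(\<integral>\<^sup>+x. h (Y x) * indicator C (W x) \<partial>Q) =
      ennreal p * (\<integral>\<^sup>+x. h (Y (fst x, snd x, 1)) * indicator C (W (fst x, snd x, 1)) \<partial>(B \<Otimes>\<^sub>M M1)) +
      ennreal (1 - p) * (\<integral>\<^sup>+x. h (Y (fst x, snd x, 0)) * indicator C (W (fst x, snd x, 0)) \<partial>(B \<Otimes>\<^sub>M M1))"
      unfolding Q_def using a
      by (intro Q_nn[OF sfM1 _ _ spB]) (auto simp: Q_def[symmetric] m)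
    also have "\<dots> = ennreal p * (\<integral>\<^sup>+x. h (fst x * snd x + (1 - fst x)) \<partial>(B \<Otimes>\<^sub>M M1)) * indicator C 1 +
      ennreal (1 - p) * (\<integral>\<^sup>+x. h (fst x * snd x) \<partial>(B \<Otimes>\<^sub>M M1)) * indicator C 0"
    proof -
      have fm: "(\<lambda>x::real\<times>real. fst x) \<in> borel_measurable (borel \<Otimes>\<^sub>M borel)" "(\<lambda>x::real\<times>real. snd x) \<in> borel_measurable (borel \<Otimes>\<^sub>M borel)"
        by (rule measurable_fst, rule measurable_snd)
      have hm1: "(\<lambda>x. h (fst x * snd x + (1 - fst x))) \<in> borel_measurable (B \<Otimes>\<^sub>M M1)"
        by (subst measurable_cong_sets[OF sBM refl], rule measurable_compose[OF _ hm])
           (intro borel_measurable_add borel_measurable_times borel_measurable_diff borel_measurable_const fm)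
      have hm0: "(\<lambda>x. h (fst x * snd x)) \<in> borel_measurable (B \<Otimes>\<^sub>M M1)"
        by (subst measurable_cong_sets[OF sBM refl], rule measurable_compose[OF _ hm])
           (intro borel_measurable_times fm)
      show ?thesis by (simp add: Y_def W_def nn_integral_multc[OF hm1] nn_integral_multc[OF hm0] mult.assoc)
    qed
    finally show ?thesis .
  qed

  have Sset: "{x \<in> space Q. Y x \<in> A \<and> W x = c} \<in> sets Q" if A: "A \<in> sets borel" for A c
  proof -
    have "{x \<in> space Q. Y x \<in> A \<and> W x = c} = (Y -` A \<inter> space Q) \<inter> (W -` {c} \<inter> space Q)" by auto
    also have "\<dots> \<in> sets Q" using measurable_sets[OF Ym A] measurable_sets[OF Wm, of "{c}"] by auto
    finally show ?thesis .
  qed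
  have E: "emeasure Q {x \<in> space Q. Y x \<in> A \<and> W x = c} = (\<integral>\<^sup>+x. indicator A (Y x) * indicator {c} (W x) \<partial>Q)"
    if A: "A \<in> sets borel" for A c
  proof -
    have "(\<integral>\<^sup>+x. indicator A (Y x) * indicator {c} (W x) \<partial>Q) = (\<integral>\<^sup>+x. indicator {x \<in> space Q. Y x \<in> A \<and> W x = c} x \<partial>Q)"
      by (intro nn_integral_cong) (auto simp: indicator_def)
    also have "\<dots> = emeasure Q {x \<in> space Q. Y x \<in> A \<and> W x = c}"
      by (rule nn_integral_indicator[OF Sset[OF A]])
    finally show ?thesis ..
  qed
  have E1: "emeasure Q {x \<in> space Q. Y x \<in> A \<and> W x = 1} = ennreal p * I1 A" if A: "A \<in> sets borel" for A
    unfolding E[OF A] I1_def by (subst QY[OF borel_measurable_indicator[OF A]]) auto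
  have E0: "emeasure Q {x \<in> space Q. Y x \<in> A \<and> W x = 0} = ennreal (1 - p) * I0 A" if A: "A \<in> sets borel" for A
    unfolding E[OF A] I0_def by (subst QY[OF borel_measurable_indicator[OF A]]) auto
  have D: "emeasure (distr Q borel Y) A = ennreal p * I1 A + ennreal (1 - p) * I0 A" if A: "A \<in> sets borel" for A
  proof -
    have "emeasure (distr Q borel Y) A = (\<integral>\<^sup>+x. indicator A x \<partial>distr Q borel Y)"
      using A by (simp add: nn_integral_indicator)
    also have "\<dots> = (\<integral>\<^sup>+x. indicator A (Y x) * indicator UNIV (W x) \<partial>Q)"
      using A by (subst nn_integral_distr[OF Ym]) auto
    also have "\<dots> = ennreal p * I1 A + ennreal (1 - p) * I0 A"
      unfolding I1_def I0_def by (subst QY[OF borel_measurable_indicator[OF A]]) auto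
    finally show ?thesis .
  qed
  have I1U: "I1 UNIV = 1" "I0 UNIV = 1"
    unfolding I1_def I0_def by (simp_all add: BM1.emeasure_space_1)

  have sBM2: "sets (B \<Otimes>\<^sub>M M2) = sets (borel \<Otimes>\<^sub>M borel)"
    using sB sM2 by (intro sets_pair_measure_cong) auto
  have fm: "(\<lambda>x::real\<times>real. fst x) \<in> borel_measurable (borel \<Otimes>\<^sub>M borel)" "(\<lambda>x::real\<times>real. snd x) \<in> borel_measurable (borel \<Otimes>\<^sub>M borel)"
    by (rule measurable_fst, rule measurable_snd)
  have g1m: "(\<lambda>x::real\<times>real. 1 - fst x * snd x) \<in> borel_measurable (borel \<Otimes>\<^sub>M borel)"
    by (intro borel_measurable_diff borel_measurable_times borel_measurable_const fm)
  have g0m: "(\<lambda>x::real\<times>real. fst x * snd x) \<in> borel_measurable (borel \<Otimes>\<^sub>M borel)"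
    by (intro borel_measurable_times fm)
  define J2 where "J2 A = (\<integral>\<^sup>+x. indicator A (1 - fst x * snd x) \<partial>(B \<Otimes>\<^sub>M M2))" for A
  have J2I1: "J2 A = I1 A" if A: "A \<in> sets borel" for A
  proof -
    have gm: "(\<lambda>m. 1 - m) \<in> borel_measurable M1"
      by (subst measurable_cong_sets[OF sM1 refl]) simp
    have sf: "sigma_finite_measure (distr M1 borel (\<lambda>m. 1 - m))" using sfM2 sym by simp
    have hm: "(\<lambda>x. indicator A (1 - fst x * snd x)) \<in> borel_measurable (borel \<Otimes>\<^sub>M borel)"
      by (rule measurable_compose[OF g1m borel_measurable_indicator[OF A]])
    have "J2 A = (\<integral>\<^sup>+x. indicator A (1 - fst x * (1 - snd x)) \<partial>(B \<Otimes>\<^sub>M M1))"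
      unfolding J2_def sym using pair_distr_nn[OF sB gm sf hm] by simp
    also have "\<dots> = I1 A" unfolding I1_def
      by (intro nn_integral_cong) (simp add: algebra_simps)
    finally show ?thesis .
  qed
  have R1: "emeasure (distr (B \<Otimes>\<^sub>M M2) borel (\<lambda>(b, m). 1 - b * m)) A = I1 A" if A: "A \<in> sets borel" for A
  proof -
    have m: "(\<lambda>(b, m). 1 - b * m) \<in> borel_measurable (B \<Otimes>\<^sub>M M2)"
      by (subst measurable_cong_sets[OF sBM2 refl]) (use g1m in \<open>simp add: case_prod_unfold\<close>)
    have "emeasure (distr (B \<Otimes>\<^sub>M M2) borel (\<lambda>(b, m). 1 - b * m)) A = (\<integral>\<^sup>+x. indicator A x \<partial>distr (B \<Otimes>\<^sub>M M2) borel (\<lambda>(b, m). 1 - b * m))"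
      using A by (simp add: nn_integral_indicator)
    also have "\<dots> = J2 A"
      unfolding J2_def using A by (subst nn_integral_distr[OF m]) (auto simp: case_prod_unfold)
    finally show ?thesis using J2I1[OF A] by simp
  qed
  have R0: "emeasure (distr (B \<Otimes>\<^sub>M M1) borel (\<lambda>(b, m). b * m)) A = I0 A" if A: "A \<in> sets borel" for A
  proof -
    have m: "(\<lambda>(b, m). b * m) \<in> borel_measurable (B \<Otimes>\<^sub>M M1)"
      by (subst measurable_cong_sets[OF sBM refl]) (use g0m in \<open>simp add: case_prod_unfold\<close>)
    have "emeasure (distr (B \<Otimes>\<^sub>M M1) borel (\<lambda>(b, m). b * m)) A = (\<integral>\<^sup>+x. indicator A x \<partial>distr (B \<Otimes>\<^sub>M M1) borel (\<lambda>(b, m). b * m))"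
      using A by (simp add: nn_integral_indicator)
    also have "\<dots> = I0 A"
      unfolding I0_def using A by (subst nn_integral_distr[OF m]) (auto simp: case_prod_unfold)
    finally show ?thesis .
  qed
  have UA: "UNIV \<in> sets (borel :: real measure)" by simp
  have Wset: "{x \<in> space Q. W x = c} = {x \<in> space Q. Y x \<in> UNIV \<and> W x = c}" for c by simp
  have cond1: "measure Q {x \<in> space Q. Y x \<in> A \<and> W x = 1} / measure Q {x \<in> space Q. W x = 1}
      = measure (distr (B \<Otimes>\<^sub>M M2) borel (\<lambda>(b, m). 1 - b * m)) A" if A: "A \<in> sets borel" for A
    unfolding measure_def Wset E1[OF A] E1[OF UA] R1[OF A] I1U
    using a by (simp add: enn2real_mult)
  have cond0: "measure Q {x \<in> space Q. Y x \<in> A \<and> W x = 0} / measure Q {x \<in> space Q. W x = 0}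
      = measure (distr (B \<Otimes>\<^sub>M M1) borel (\<lambda>(b, m). b * m)) A" if A: "A \<in> sets borel" for A
    unfolding measure_def Wset E0[OF A] E0[OF UA] R0[OF A] I1U
    using a by (simp add: enn2real_mult)

  note f1m[measurable] = f1_meas and f2m[measurable] = f2_meas
  define Kc :: "real \<Rightarrow> real" where "Kc u = (1 - \<alpha>) * (1 - u) powr (- \<alpha>) * (1 / u)" for u
  define G1 where "G1 A u t = indicator {0<..<1} u * (indicator A t * ennreal (Kc u * f1 (t / u)))" for A u t
  define G2 where "G2 A u t = indicator {0<..<1} u * (indicator A t * ennreal (Kc u * f2 ((1 - t) / u)))" for A u t
  have I0d: "I0 A = (\<integral>\<^sup>+u. \<integral>\<^sup>+t. G1 A u t \<partial>lborel \<partial>lborel)" if A: "A \<in> sets borel" for A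
  proof -
    have M1d: "M1 = density lborel (\<lambda>x. ennreal (f1 x))" using f1_dens M1_def by simp
    have "I0 A = (\<integral>\<^sup>+x. indicator A ((\<lambda>x. fst x * snd x) x) \<partial>(beta_measure 1 (1 - \<alpha>) \<Otimes>\<^sub>M density lborel (\<lambda>x. ennreal (f1 x))))"
      unfolding I0_def B_def M1d ..
    also have "\<dots> = (\<integral>\<^sup>+u. \<integral>\<^sup>+t. indicator {0<..<1} u * (indicator A t * ennreal ((1 - \<alpha>) * (1 - u) powr (- \<alpha>) * (1 / u) * f1 (t / u))) \<partial>lborel \<partial>lborel)"
    proof (rule dens_aux[OF a(1,2) f1_meas _ A g0m])
      show "sigma_finite_measure (density lborel (\<lambda>x. ennreal (f1 x)))" using sfM1 M1d by simp
      show "(\<integral>\<^sup>+m. ennreal (f1 m) * indicator A (fst (u, m) * snd (u, m)) \<partial>lborel) =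
          ennreal (1 / u) * (\<integral>\<^sup>+t. ennreal (f1 (t / u)) * indicator A t \<partial>lborel)" if "0 < u" for u
        using subst0[OF that f1_meas A] by simp
      show "0 \<le> f1 (t / u)" for u t by (rule f1_nonneg)
      show "(\<lambda>t. f1 (t / u)) \<in> borel_measurable borel" for u by measurable
    qed
    finally show ?thesis unfolding G1_def Kc_def .
  qed
  have I1d: "I1 A = (\<integral>\<^sup>+u. \<integral>\<^sup>+t. G2 A u t \<partial>lborel \<partial>lborel)" if A: "A \<in> sets borel" for A
  proof -
    have M2d: "M2 = density lborel (\<lambda>x. ennreal (f2 x))" using f2_dens M2_def by simp
    have "I1 A = (\<integral>\<^sup>+x. indicator A ((\<lambda>x. 1 - fst x * snd x) x) \<partial>(beta_measure 1 (1 - \<alpha>) \<Otimes>\<^sub>M density lborel (\<lambda>x. ennreal (f2 x))))"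
      unfolding J2I1[OF A, symmetric] J2_def B_def M2d ..
    also have "\<dots> = (\<integral>\<^sup>+u. \<integral>\<^sup>+t. indicator {0<..<1} u * (indicator A t * ennreal ((1 - \<alpha>) * (1 - u) powr (- \<alpha>) * (1 / u) * f2 ((1 - t) / u))) \<partial>lborel \<partial>lborel)"
    proof (rule dens_aux[OF a(1,2) f2_meas _ A g1m])
      show "sigma_finite_measure (density lborel (\<lambda>x. ennreal (f2 x)))" using sfM2 M2d by simp
      show "(\<integral>\<^sup>+m. ennreal (f2 m) * indicator A (1 - fst (u, m) * snd (u, m)) \<partial>lborel) =
          ennreal (1 / u) * (\<integral>\<^sup>+t. ennreal (f2 ((1 - t) / u)) * indicator A t \<partial>lborel)" if "0 < u" for u
        using subst1[OF that f2_meas A] by simp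
      show "0 \<le> f2 ((1 - t) / u)" for u t by (rule f2_nonneg)
      show "(\<lambda>t. f2 ((1 - t) / u)) \<in> borel_measurable borel" for u by measurable
    qed
    finally show ?thesis unfolding G2_def Kc_def .
  qed
  have G1m: "case_prod (G1 A) \<in> borel_measurable (lborel \<Otimes>\<^sub>M lborel)" if A[measurable]: "A \<in> sets borel" for A
    unfolding G1_def Kc_def by measurable
  have G2m: "case_prod (G2 A) \<in> borel_measurable (lborel \<Otimes>\<^sub>M lborel)" if A[measurable]: "A \<in> sets borel" for A
    unfolding G2_def Kc_def by measurable

  have G1i: "(\<lambda>t. G1 A u t) \<in> borel_measurable lborel" if "A \<in> sets borel" for A u
    using measurable_Pair2[OF G1m[OF that], of u] by simp
  have G2i: "(\<lambda>t. G2 A u t) \<in> borel_measurable lborel" if "A \<in> sets borel" for A u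
    using measurable_Pair2[OF G2m[OF that], of u] by simp
  have G1o: "(\<lambda>u. \<integral>\<^sup>+t. G1 A u t \<partial>lborel) \<in> borel_measurable lborel" if "A \<in> sets borel" for A
    by (rule lborel.borel_measurable_nn_integral[OF G1m[OF that]])
  have G2o: "(\<lambda>u. \<integral>\<^sup>+t. G2 A u t \<partial>lborel) \<in> borel_measurable lborel" if "A \<in> sets borel" for A
    by (rule lborel.borel_measurable_nn_integral[OF G2m[OF that]])
  have D2: "emeasure (distr Q borel Y) A = (\<integral>\<^sup>+t. \<integral>\<^sup>+u. ennreal p * G2 A u t + ennreal (1 - p) * G1 A u t \<partial>lborel \<partial>lborel)"
    if A: "A \<in> sets borel" for A
  proof -
    have "emeasure (distr Q borel Y) A = ennreal p * (\<integral>\<^sup>+u. \<integral>\<^sup>+t. G2 A u t \<partial>lborel \<partial>lborel) + ennreal (1 - p) * (\<integral>\<^sup>+u. \<integral>\<^sup>+t. G1 A u t \<partial>lborel \<partial>lborel)"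
      by (simp only: D[OF A] I1d[OF A] I0d[OF A])
    also have "\<dots> = (\<integral>\<^sup>+u. ennreal p * (\<integral>\<^sup>+t. G2 A u t \<partial>lborel) + ennreal (1 - p) * (\<integral>\<^sup>+t. G1 A u t \<partial>lborel) \<partial>lborel)"
    proof -
      have "(\<integral>\<^sup>+u. ennreal p * (\<integral>\<^sup>+t. G2 A u t \<partial>lborel) + ennreal (1 - p) * (\<integral>\<^sup>+t. G1 A u t \<partial>lborel) \<partial>lborel)
        = (\<integral>\<^sup>+u. ennreal p * (\<integral>\<^sup>+t. G2 A u t \<partial>lborel) \<partial>lborel) + (\<integral>\<^sup>+u. ennreal (1 - p) * (\<integral>\<^sup>+t. G1 A u t \<partial>lborel) \<partial>lborel)"
        by (rule nn_integral_add) (rule borel_measurable_times_ennreal[OF measurable_const], simp, rule G2o[OF A],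
            rule borel_measurable_times_ennreal[OF measurable_const], simp, rule G1o[OF A])
      then show ?thesis by (simp only: nn_integral_cmult[OF G2o[OF A]] nn_integral_cmult[OF G1o[OF A]])
    qed
    also have "\<dots> = (\<integral>\<^sup>+u. \<integral>\<^sup>+t. ennreal p * G2 A u t + ennreal (1 - p) * G1 A u t \<partial>lborel \<partial>lborel)"
    proof (intro nn_integral_cong)
      fix u
      have "(\<integral>\<^sup>+t. ennreal p * G2 A u t + ennreal (1 - p) * G1 A u t \<partial>lborel)
        = (\<integral>\<^sup>+t. ennreal p * G2 A u t \<partial>lborel) + (\<integral>\<^sup>+t. ennreal (1 - p) * G1 A u t \<partial>lborel)"
        by (rule nn_integral_add) (rule borel_measurable_times_ennreal[OF measurable_const], simp, rule G2i[OF A],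
            rule borel_measurable_times_ennreal[OF measurable_const], simp, rule G1i[OF A])
      then show "ennreal p * (\<integral>\<^sup>+t. G2 A u t \<partial>lborel) + ennreal (1 - p) * (\<integral>\<^sup>+t. G1 A u t \<partial>lborel) =
          (\<integral>\<^sup>+t. ennreal p * G2 A u t + ennreal (1 - p) * G1 A u t \<partial>lborel)"
        by (simp only: nn_integral_cmult[OF G2i[OF A]] nn_integral_cmult[OF G1i[OF A]])
    qed
    also have "\<dots> = (\<integral>\<^sup>+t. \<integral>\<^sup>+u. ennreal p * G2 A u t + ennreal (1 - p) * G1 A u t \<partial>lborel \<partial>lborel)"
    proof (rule lborel_pair.Fubini'[symmetric])
      show "(\<lambda>(u, t). ennreal p * G2 A u t + ennreal (1 - p) * G1 A u t) \<in> borel_measurable (lborel \<Otimes>\<^sub>M lborel)"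
        using A unfolding G1_def G2_def Kc_def by measurable
    qed
    finally show ?thesis .
  qed
  define g where "g t = ennreal (1 - \<alpha>) * (\<integral>\<^sup>+ u. indicator {0<..<1} u *
              ennreal (((1 - p) * f1 (t / u) + p * f2 ((1 - t) / u)) * (1 / u) * (1 - u) powr (- \<alpha>)) \<partial>lborel)" for t
  define H where "H t u = indicator {0<..<1} u *
              ennreal (((1 - p) * f1 (t / u) + p * f2 ((1 - t) / u)) * (1 / u) * (1 - u) powr (- \<alpha>))" for t u
  have Hm: "case_prod H \<in> borel_measurable (lborel \<Otimes>\<^sub>M lborel)"
    unfolding H_def by measurable
  have Hi: "(\<lambda>u. H t u) \<in> borel_measurable lborel" for t
    using measurable_Pair2[OF Hm, of t] by simp
  have gm: "g \<in> borel_measurable lborel"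
    unfolding g_def H_def[symmetric]
    by (rule borel_measurable_times_ennreal[OF measurable_const lborel.borel_measurable_nn_integral[OF Hm]]) simp
  have gA: "g t * indicator A t = (\<integral>\<^sup>+u. ennreal p * G2 A u t + ennreal (1 - p) * G1 A u t \<partial>lborel)"
    if A: "A \<in> sets borel" for A t
  proof -
    have "g t * indicator A t = (\<integral>\<^sup>+u. ennreal (1 - \<alpha>) * H t u * indicator A t \<partial>lborel)"
    proof -
      have m2: "(\<lambda>u. ennreal (1 - \<alpha>) * H t u) \<in> borel_measurable lborel"
        by (rule borel_measurable_times_ennreal[OF measurable_const Hi]) simp
      show ?thesis unfolding g_def H_def[symmetric]
        by (simp only: nn_integral_multc[OF m2] nn_integral_cmult[OF Hi])
    qed
    also have "\<dots> = (\<integral>\<^sup>+u. ennreal p * G2 A u t + ennreal (1 - p) * G1 A u t \<partial>lborel)"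
    proof (intro nn_integral_cong)
      fix u
      show "ennreal (1 - \<alpha>) * H t u * indicator A t = ennreal p * G2 A u t + ennreal (1 - p) * G1 A u t"
      proof (cases "u \<in> {0<..<1}")
        case False then show ?thesis by (simp add: H_def G1_def G2_def)
      next
        case True
        then have u: "0 < u" "u < 1" by auto
        have Kc: "0 \<le> Kc u" unfolding Kc_def using a u by simp
        have "ennreal p * G2 A u t + ennreal (1 - p) * G1 A u t =
            ennreal p * (indicator A t * ennreal (Kc u * f2 ((1 - t) / u))) + ennreal (1 - p) * (indicator A t * ennreal (Kc u * f1 (t / u)))"
          using True by (simp add: G1_def G2_def)
        also have "\<dots> = indicator A t * ennreal (p * (Kc u * f2 ((1 - t) / u)) + (1 - p) * (Kc u * f1 (t / u)))"
          using a Kc f1_nonneg f2_nonneg by (intro ennreal_comb) auto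
        also have "p * (Kc u * f2 ((1 - t) / u)) + (1 - p) * (Kc u * f1 (t / u)) =
            (1 - \<alpha>) * (((1 - p) * f1 (t / u) + p * f2 ((1 - t) / u)) * (1 / u) * (1 - u) powr (- \<alpha>))"
          unfolding Kc_def by (rule ring_id)
        also have "indicator A t * ennreal \<dots> = ennreal (1 - \<alpha>) * H t u * indicator A t"
        proof -
          define R where "R = ((1 - p) * f1 (t / u) + p * f2 ((1 - t) / u)) * (1 / u) * (1 - u) powr (- \<alpha>)"
          have R: "0 \<le> R" unfolding R_def using a u f1_nonneg f2_nonneg
            by (intro mult_nonneg_nonneg add_nonneg_nonneg) auto
          have e1: "ennreal ((1 - \<alpha>) * R) = ennreal (1 - \<alpha>) * ennreal R" using a R by (intro ennreal_mult) auto
          have e2: "H t u = ennreal R" using True by (simp add: H_def R_def)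
          show ?thesis unfolding R_def[symmetric] e1 e2 by (simp add: mult_ac)
        qed
        finally show ?thesis ..
      qed
    qed
    finally show ?thesis .
  qed
  have dens: "distr Q borel Y = density lborel g"
  proof (rule measure_eqI)
    show "sets (distr Q borel Y) = sets (density lborel g)" by simp
    fix A assume "A \<in> sets (distr Q borel Y)"
    then have A: "A \<in> sets borel" by simp
    have "emeasure (density lborel g) A = (\<integral>\<^sup>+t. g t * indicator A t \<partial>lborel)"
      using A by (intro emeasure_density gm) simp
    also have "\<dots> = emeasure (distr Q borel Y) A"
      unfolding D2[OF A] by (intro nn_integral_cong gA A)
    finally show "emeasure (distr Q borel Y) A = emeasure (density lborel g) A" ..
  qed
  have part3: "PY_mean_law \<alpha> (1 - \<alpha>) (bern p) = density lborel g"
    using ident dens unfolding Q_def B_def M1_def Y_def by simp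
  have main: "((\<forall>A \<in> sets borel.
            measure Q {x \<in> space Q. Y x \<in> A \<and> W x = 1} / measure Q {x \<in> space Q. W x = 1}
            = measure (distr (B \<Otimes>\<^sub>M M2) borel (\<lambda>(b, m). 1 - b * m)) A)
       \<and> (\<forall>A \<in> sets borel.
            measure Q {x \<in> space Q. Y x \<in> A \<and> W x = 0} / measure Q {x \<in> space Q. W x = 0}
            = measure (distr (B \<Otimes>\<^sub>M M1) borel (\<lambda>(b, m). b * m)) A))
       \<and> PY_mean_law \<alpha> (1 - \<alpha>) (bern p) = density lborel g"
    using cond1 cond0 part3 by blast
  show ?thesis
    unfolding Let_def using main[unfolded Q_def B_def M1_def M2_def Y_def W_def g_def[abs_def]] .
qed

end
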